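(* There exists a unique algebra homomorphism $\widetilde\natural:\mathcal H_q\to\mathfrak{W}_q$ sending $A\mapsto K_2^{-1}$, $B\mapsto \widetilde\Delta(\Lambda)=(q-q^{-1})^2(E_1+K_1^{-1}E_2)(F_1K_2+F_2)+q^{-1}K_1K_2+qK_1^{-1}K_2^{-1}$, and $C\mapsto IK_1^{-1}-q(q-q^{-1})^2E_1F_2K_2^{-1}$. Moreover $\widetilde\natural(\alpha)=\Lambda_2+\Lambda_1K_1^{-1}K_2^{-1}$, $\widetilde\natural(\beta)=IK_1^{-1}K_2^{-1}$ and $\widetilde\natural(\gamma)=\Lambda_1+\Lambda_2K_1^{-1}K_2^{-1}$.
   Context: Throughout, $q$ is a nonzero complex number that is not a root of unity; $[x,y]=xy-yx$ and $[x,y]_q=qxy-q^{-1}yx$. $\mathfrak{W}_q$ is the algebra over $\mathbb C$ generated by $E_1,E_2,F_1,F_2,K_1^{\pm1},K_2^{\pm1},I^{\pm1}$ subject to: $I$ is central; $II^{-1}=I^{-1}I=1$, $K_1K_1^{-1}=K_1^{-1}K_1=1$, $K_2K_2^{-1}=K_2^{-1}K_2=1$; $[K_1,E_2]=[K_1,F_2]=[K_1,K_2]=[K_2,E_1]=[K_2,F_1]=0$; $[E_1,K_1]_q=[K_1,F_1]_q=[E_2,K_2]_q=[K_2,F_2]_q=0$; $[E_1,E_2]=[E_1,F_2]=[F_1,E_2]=[F_1,F_2]=0$; $[E_1,F_1]=\frac{K_1-IK_1^{-1}}{q-q^{-1}}$; $[E_2,F_2]=\frac{IK_2-K_2^{-1}}{q-q^{-1}}$.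 $\Lambda_1=(q-q^{-1})^2E_1F_1+q^{-1}K_1+qIK_1^{-1}$, $\Lambda_2=(q-q^{-1})^2E_2F_2+q^{-1}IK_2+qK_2^{-1}$. The universal $q$-Hahn algebra $\mathcal H_q$ is the algebra over $\mathbb C$ generated by $A,B,C$ subject to the relations that each of $\frac{[B,C]_q}{q^2-q^{-2}}+A$, $[C,A]_q$, $\frac{[A,B]_q}{q^2-q^{-2}}+C$ commutes with $A,B,C$. Its central elements $\alpha,\beta,\gamma$ are $\alpha=\frac{[B,C]_q}{q-q^{-1}}+(q+q^{-1})A$, $\beta=\frac{[C,A]_q}{q-q^{-1}}$, $\gamma=\frac{[A,B]_q}{q-q^{-1}}+(q+q^{-1})C$. *)

theory Defs
  imports Complex_Main "HOL-Algebra.QuotRing" "HOL-Library.Poly_Mapping"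
begin

datatype 'g word = Word "'g list"

instantiation word :: (type) monoid_add
begin
definition zero_word :: "'g word" where "zero_word = Word []"
fun plus_word :: "'g word \<Rightarrow> 'g word \<Rightarrow> 'g word" where
  "plus_word (Word a) (Word b) = Word (a @ b)"
instance
proof
  fix a b c :: "'g word"
  show "a + b + c = a + (b + c)" by (cases a; cases b; cases c) simp
  show "0 + a = a" by (cases a) (simp add: zero_word_def)
  show "a + 0 = a" by (cases a) (simp add: zero_word_def)
qed
end

text \<open>The free algebra: finitely supported complex functions on words,
  with convolution product (noncommutative polynomials).\<close>

type_synonym 'g freealg = "'g word \<Rightarrow>\<^sub>0 complex"

definition gen :: "'g \<Rightarrow> 'g freealg" where
  "gen x = Poly_Mapping.single (Word [x]) 1"

definition cst :: "complex \<Rightarrow> 'g freealg" where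
  "cst c = Poly_Mapping.single 0 c"

definition FreeRing :: "'g freealg ring" where
  "FreeRing = \<lparr>carrier = UNIV, mult = (*), one = 1, zero = 0, add = (+)\<rparr>"

definition comm :: "'g freealg \<Rightarrow> 'g freealg \<Rightarrow> 'g freealg" where
  "comm x y = x * y - y * x"

definition qcomm :: "complex \<Rightarrow> 'g freealg \<Rightarrow> 'g freealg \<Rightarrow> 'g freealg" where
  "qcomm q x y = cst q * x * y - cst (inverse q) * y * x"

datatype genW = E1 | E2 | F1 | F2 | K1 | K1i | K2 | K2i | II | IIi

text \<open>Each relation r is imposed as r = 0.  K1i, K2i, IIi stand for the inverses.\<close>

definition relsW :: "complex \<Rightarrow> genW freealg set" where
  "relsW q =
     {comm (gen II) (gen x) | x. True}
   \<union> { gen II * gen IIi - 1, gen IIi * gen II - 1,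
       gen K1 * gen K1i - 1, gen K1i * gen K1 - 1,
       gen K2 * gen K2i - 1, gen K2i * gen K2 - 1,
       comm (gen K1) (gen E2), comm (gen K1) (gen F2), comm (gen K1) (gen K2),
       comm (gen K2) (gen E1), comm (gen K2) (gen F1),
       qcomm q (gen E1) (gen K1), qcomm q (gen K1) (gen F1),
       qcomm q (gen E2) (gen K2), qcomm q (gen K2) (gen F2),
       comm (gen E1) (gen E2), comm (gen E1) (gen F2),
       comm (gen F1) (gen E2), comm (gen F1) (gen F2),
       comm (gen E1) (gen F1) - cst (inverse (q - inverse q)) * (gen K1 - gen II * gen K1i),
       comm (gen E2) (gen F2) - cst (inverse (q - inverse q)) * (gen II * gen K2 - gen K2i) }"

definition Wq :: "complex \<Rightarrow> genW freealg set ring" where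
  "Wq q = FreeRing Quot (genideal FreeRing (relsW q))"

definition clsW :: "complex \<Rightarrow> genW freealg \<Rightarrow> genW freealg set" where
  "clsW q x = a_r_coset FreeRing (genideal FreeRing (relsW q)) x"

definition Lambda1 :: "complex \<Rightarrow> genW freealg" where
  "Lambda1 q = cst ((q - inverse q)^2) * gen E1 * gen F1 + cst (inverse q) * gen K1
               + cst q * gen II * gen K1i"

definition Lambda2 :: "complex \<Rightarrow> genW freealg" where
  "Lambda2 q = cst ((q - inverse q)^2) * gen E2 * gen F2 + cst (inverse q) * gen II * gen K2
               + cst q * gen K2i"

datatype genH = GA | GB | GC

definition relsH :: "complex \<Rightarrow> genH freealg set" where
  "relsH q =
     (\<Union>X\<in>{gen GA, gen GB, gen GC}.
        { comm (cst (inverse (q^2 - inverse (q^2))) * qcomm q (gen GB) (gen GC) + gen GA) X,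
          comm (qcomm q (gen GC) (gen GA)) X,
          comm (cst (inverse (q^2 - inverse (q^2))) * qcomm q (gen GA) (gen GB) + gen GC) X })"

definition Hq :: "complex \<Rightarrow> genH freealg set ring" where
  "Hq q = FreeRing Quot (genideal FreeRing (relsH q))"

definition clsH :: "complex \<Rightarrow> genH freealg \<Rightarrow> genH freealg set" where
  "clsH q x = a_r_coset FreeRing (genideal FreeRing (relsH q)) x"

definition alphaH :: "complex \<Rightarrow> genH freealg" where
  "alphaH q = cst (inverse (q - inverse q)) * qcomm q (gen GB) (gen GC) + cst (q + inverse q) * gen GA"

definition betaH :: "complex \<Rightarrow> genH freealg" where
  "betaH q = cst (inverse (q - inverse q)) * qcomm q (gen GC) (gen GA)"

definition gammaH :: "complex \<Rightarrow> genH freealg" where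
  "gammaH q = cst (inverse (q - inverse q)) * qcomm q (gen GA) (gen GB) + cst (q + inverse q) * gen GC"

text \<open>A complex-algebra homomorphism: a unital ring homomorphism that is
  complex-linear, i.e. maps the scalar c\<cdot>1 to c\<cdot>1.\<close>

definition alg_hom_HW :: "complex \<Rightarrow> (genH freealg set \<Rightarrow> genW freealg set) \<Rightarrow> bool" where
  "alg_hom_HW q f \<longleftrightarrow> f \<in> ring_hom (Hq q) (Wq q) \<and> (\<forall>c. f (clsH q (cst c)) = clsW q (cst c))"

end

theory Submission
  imports Defs
begin


lemma assoc_rule: "(a::'a::semigroup_mult)*b = c \<Longrightarrow> a*(b*z) = c*z"
  by (simp add: mult.assoc[symmetric])

lemma inv_comm_gen:
  fixes K Ki X c :: "'a::{ring,monoid_mult}"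
  assumes "K*Ki = 1" "Ki*K = 1" "X*K = c*(K*X)" "\<And>y. c*y = y*c"
  shows "Ki*X = c*(X*Ki)"
proof -
  have "Ki*X = Ki*(X*K)*Ki" using assms(1) by (simp add: mult.assoc)
  also have "\<dots> = Ki*(K*X)*Ki*c" using assms(3,4) by (simp add: mult.assoc)
  also have "\<dots> = X*Ki*c" using assms(2) by (simp add: mult.assoc[symmetric])
  finally show ?thesis using assms(4) by (simp add: mult.assoc)
qed

locale wrels =
  fixes E1 F1 E2 F2 K1 K1i K2 K2i I Q Qi :: "'a::{ring,monoid_mult}"
  assumes Qc: "\<And>x. x * Q = Q * x" and Qic: "\<And>x. x * Qi = Qi * x" and QQi: "Q * Qi = 1"
  and IE1: "E1 * I = I * E1" and IF1: "F1 * I = I * F1" and IE2: "E2 * I = I * E2" and IF2: "F2 * I = I * F2"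
  and IK1: "K1 * I = I * K1" and IK1i: "K1i * I = I * K1i" and IK2: "K2 * I = I * K2" and IK2i: "K2i * I = I * K2i"
  and K1K1i: "K1 * K1i = 1" and K1iK1: "K1i * K1 = 1" and K2K2i: "K2 * K2i = 1" and K2iK2: "K2i * K2 = 1"
  and K1E2: "K1 * E2 = E2 * K1" and K1F2: "K1 * F2 = F2 * K1" and K1K2: "K1 * K2 = K2 * K1"
  and K2E1: "K2 * E1 = E1 * K2" and K2F1: "K2 * F1 = F1 * K2"
  and E1K1: "Q * (E1 * K1) = Qi * (K1 * E1)" and K1F1: "Q * (K1 * F1) = Qi * (F1 * K1)"
  and E2K2: "Q * (E2 * K2) = Qi * (K2 * E2)" and K2F2: "Q * (K2 * F2) = Qi * (F2 * K2)"
  and E1E2: "E1 * E2 = E2 * E1" and E1F2: "E1 * F2 = F2 * E1" and F1E2: "F1 * E2 = E2 * F1" and F1F2: "F1 * F2 = F2 * F1"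
  and EF1: "E1 * F1 - F1 * E1 = (Q - Qi) * (K1 - I * K1i)"
  and EF2: "E2 * F2 - F2 * E2 = (Q - Qi) * (I * K2 - K2i)"
begin

lemma QiQ: "Qi * Q = 1" using QQi Qic by metis
lemma QQc: "(Q*Q) * y = y * (Q*Q)" by (metis Qc mult.assoc)
lemma QiQic: "(Qi*Qi) * y = y * (Qi*Qi)" by (metis Qic mult.assoc)

lemma swapQ: "Q * (a * b) = Qi * (b * a) \<Longrightarrow> b * a = Q*Q*(a*b)"
proof -
  assume h: "Q * (a * b) = Qi * (b * a)"
  have "Q*Q*(a*b) = Q*(Qi*(b*a))" using h by (simp add: mult.assoc)
  also have "\<dots> = b*a" by (simp add: mult.assoc[symmetric] QQi)
  finally show ?thesis by simp
qed

lemma swapQi: "Q * (a * b) = Qi * (b * a) \<Longrightarrow> a * b = Qi*Qi*(b*a)"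
proof -
  assume h: "Q * (a * b) = Qi * (b * a)"
  have "Qi*Qi*(b*a) = Qi*(Q*(a*b))" using h by (simp add: mult.assoc)
  also have "\<dots> = a*b" by (simp add: mult.assoc[symmetric] QiQ)
  finally show ?thesis by simp
qed

lemma r_K1E1: "K1 * E1 = Q*Q*(E1*K1)" by (rule swapQ[OF E1K1])
lemma r_K1F1: "K1 * F1 = Qi*Qi*(F1*K1)" by (rule swapQi[OF K1F1])
lemma r_K2E2: "K2 * E2 = Q*Q*(E2*K2)" by (rule swapQ[OF E2K2])
lemma r_K2F2: "K2 * F2 = Qi*Qi*(F2*K2)" by (rule swapQi[OF K2F2])

lemma r_K1iE1: "K1i * E1 = Qi*Qi*(E1*K1i)"
  by (rule inv_comm_gen[OF K1K1i K1iK1 _ QiQic]) (simp add: r_K1E1 mult.assoc QiQ[THEN assoc_rule])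
lemma r_K1iF1: "K1i * F1 = Q*Q*(F1*K1i)"
  by (rule inv_comm_gen[OF K1K1i K1iK1 _ QQc]) (simp add: r_K1F1 mult.assoc QQi[THEN assoc_rule])
lemma r_K2iE2: "K2i * E2 = Qi*Qi*(E2*K2i)"
  by (rule inv_comm_gen[OF K2K2i K2iK2 _ QiQic]) (simp add: r_K2E2 mult.assoc QiQ[THEN assoc_rule])
lemma r_K2iF2: "K2i * F2 = Q*Q*(F2*K2i)"
  by (rule inv_comm_gen[OF K2K2i K2iK2 _ QQc]) (simp add: r_K2F2 mult.assoc QQi[THEN assoc_rule])

lemma one_c: "1 * y = y * (1::'a::{ring,monoid_mult})" by simp

lemma r_K1iE2: "K1i * E2 = E2 * K1i"
  using inv_comm_gen[OF K1K1i K1iK1 _ one_c, of E2] K1E2 by simp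
lemma r_K1iF2: "K1i * F2 = F2 * K1i"
  using inv_comm_gen[OF K1K1i K1iK1 _ one_c, of F2] K1F2 by simp
lemma r_K2iE1: "K2i * E1 = E1 * K2i"
  using inv_comm_gen[OF K2K2i K2iK2 _ one_c, of E1] K2E1 by simp
lemma r_K2iF1: "K2i * F1 = F1 * K2i"
  using inv_comm_gen[OF K2K2i K2iK2 _ one_c, of F1] K2F1 by simp
lemma r_K2K1i: "K2 * K1i = K1i * K2"
  using inv_comm_gen[OF K1K1i K1iK1 _ one_c, of K2] K1K2 by simp
lemma r_K2iK1: "K2i * K1 = K1 * K2i"
  using inv_comm_gen[OF K2K2i K2iK2 _ one_c, of K1] K1K2 by simp
lemma r_K2iK1i: "K2i * K1i = K1i * K2i"
  using inv_comm_gen[OF K2K2i K2iK2 _ one_c, of K1i] r_K2K1i by simp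

lemma r_F1E1: "F1 * E1 = E1 * F1 - (Q - Qi) * (K1 - K1i * I)"
  using EF1 IK1i by (simp add: algebra_simps)
lemma r_F2E2: "F2 * E2 = E2 * F2 - (Q - Qi) * (K2 * I - K2i)"
  using EF2 IK2 by (simp add: algebra_simps)

lemmas rules0 = r_K1E1 r_K1F1 r_K2E2 r_K2F2 r_K1iE1 r_K1iF1 r_K2iE2 r_K2iF2
  r_K1iE2 r_K1iF2 r_K2iE1 r_K2iF1 r_K2K1i r_K2iK1 r_K2iK1i r_F1E1 r_F2E2
  E1E2[symmetric] E1F2[symmetric] F1E2[symmetric] F1F2[symmetric]
  K1E2 K1F2 K1K2[symmetric] K2E1 K2F1 K1K1i K1iK1 K2K2i K2iK2
  IE1[symmetric] IF1[symmetric] IE2[symmetric] IF2[symmetric]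
  IK1[symmetric] IK1i[symmetric] IK2[symmetric] IK2i[symmetric]
  QQi QiQ
  Qc[of E1] Qc[of F1] Qc[of E2] Qc[of F2] Qc[of K1] Qc[of K1i] Qc[of K2] Qc[of K2i] Qc[of I]
  Qic[of E1] Qic[of F1] Qic[of E2] Qic[of F2] Qic[of K1] Qic[of K1i] Qic[of K2] Qic[of K2i] Qic[of I]
  Qic[of Q, symmetric]

lemmas nrm = rules0 rules0[THEN assoc_rule]

definition "A' = K2i"
definition "B' = (E1 + K1i*E2)*(F1*K2 + F2) + Qi*K1*K2 + Q*K1i*K2i"
definition "C' = I*K1i - Q*E1*F2*K2i"
definition "L1 = E1*F1 + Qi*K1 + Q*I*K1i"
definition "L2 = E2*F2 + Qi*I*K2 + Q*K2i"
definition "al = L2 + L1*K1i*K2i"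
definition "be = I*K1i*K2i"
definition "ga = L1 + L2*K1i*K2i"

lemma M2: "Q*C'*A' - Qi*A'*C' = (Q - Qi) * be"
  unfolding A'_def C'_def be_def by (simp add: algebra_simps nrm)

lemma M3: "Q*A'*B' - Qi*B'*A' = (Q - Qi) * (ga - (Q + Qi) * C')"
  unfolding A'_def B'_def C'_def ga_def L1_def L2_def by (simp add: algebra_simps nrm)

lemma M1: "Q*B'*C' - Qi*C'*B' = (Q - Qi) * (al - (Q + Qi) * A')"
  unfolding A'_def B'_def C'_def al_def L1_def L2_def by (simp add: algebra_simps nrm)

lemma c_al_A: "al * A' = A' * al"
  unfolding A'_def al_def L1_def L2_def by (simp add: algebra_simps nrm)
lemma c_al_B: "al * B' = B' * al"
  unfolding B'_def al_def L1_def L2_def by (simp add: algebra_simps nrm)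
lemma c_al_C: "al * C' = C' * al"
  unfolding C'_def al_def L1_def L2_def by (simp add: algebra_simps nrm)
lemma c_be_A: "be * A' = A' * be"
  unfolding A'_def be_def by (simp add: algebra_simps nrm)
lemma c_be_B: "be * B' = B' * be"
  unfolding B'_def be_def by (simp add: algebra_simps nrm)
lemma c_be_C: "be * C' = C' * be"
  unfolding C'_def be_def by (simp add: algebra_simps nrm)
lemma c_ga_A: "ga * A' = A' * ga"
  unfolding A'_def ga_def L1_def L2_def by (simp add: algebra_simps nrm)
lemma c_ga_B: "ga * B' = B' * ga"
  unfolding B'_def ga_def L1_def L2_def by (simp add: algebra_simps nrm)
lemma c_ga_C: "ga * C' = C' * ga"
  unfolding C'_def ga_def L1_def L2_def by (simp add: algebra_simps nrm)

lemma DQc: "(Q-Qi) * x = x * (Q-Qi)"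
proof -
  have "(Q-Qi) * x = Q*x - Qi*x" by (rule left_diff_distrib)
  also have "\<dots> = x*Q - x*Qi" using Qc[of x] Qic[of x] by simp
  also have "\<dots> = x*(Q-Qi)" by (rule right_diff_distrib[symmetric])
  finally show ?thesis .
qed

lemma centr_comm:
  fixes c y X :: 'a
  assumes "\<And>x. c * x = x * c" "y * X = X * y"
  shows "(c * y) * X - X * (c * y) = 0"
proof -
  have "(c * y) * X = c * (y * X)" by (simp add: mult.assoc)
  also have "\<dots> = (c * X) * y" using assms(2) by (simp add: mult.assoc)
  also have "\<dots> = X * (c * y)" using assms(1)[of X] by (simp add: mult.assoc)
  finally show ?thesis by simp
qed

lemma H1:
  assumes Rc: "\<And>x. R * x = x * R" and R1: "R * ((Q - Qi) * (Q + Qi)) = 1"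
    and X: "X \<in> {A', B', C'}"
  shows "(R*(Q*B'*C' - Qi*C'*B') + A')*X - X*(R*(Q*B'*C' - Qi*C'*B') + A') = 0"
proof -
  have "R*(Q*B'*C' - Qi*C'*B') + A' = R*((Q - Qi)*(al - (Q+Qi)*A')) + A'" by (simp add: M1)
  also have "\<dots> = (R*(Q-Qi))*al - (R*((Q-Qi)*(Q+Qi)))*A' + A'" by (simp add: algebra_simps)
  also have "\<dots> = (R*(Q-Qi))*al" by (simp add: R1)
  finally have e: "R*(Q*B'*C' - Qi*C'*B') + A' = (R*(Q-Qi))*al" .
  have c: "(R*(Q-Qi)) * x = x * (R*(Q-Qi))" for x
    using DQc Rc by (metis mult.assoc)
  show ?thesis unfolding e
    by (rule centr_comm[OF c]) (use X c_al_A c_al_B c_al_C in auto)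
qed

lemma H2:
  assumes X: "X \<in> {A', B', C'}"
  shows "(Q*C'*A' - Qi*A'*C')*X - X*(Q*C'*A' - Qi*A'*C') = 0"
proof -
  have c: "(Q-Qi) * x = x * (Q-Qi)" for x
    by (rule DQc)
  show ?thesis unfolding M2
    by (rule centr_comm[OF c]) (use X c_be_A c_be_B c_be_C in auto)
qed

lemma H3:
  assumes Rc: "\<And>x. R * x = x * R" and R1: "R * ((Q - Qi) * (Q + Qi)) = 1"
    and X: "X \<in> {A', B', C'}"
  shows "(R*(Q*A'*B' - Qi*B'*A') + C')*X - X*(R*(Q*A'*B' - Qi*B'*A') + C') = 0"
proof -
  have "R*(Q*A'*B' - Qi*B'*A') + C' = R*((Q - Qi)*(ga - (Q+Qi)*C')) + C'" by (simp add: M3)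
  also have "\<dots> = (R*(Q-Qi))*ga - (R*((Q-Qi)*(Q+Qi)))*C' + C'" by (simp add: algebra_simps)
  also have "\<dots> = (R*(Q-Qi))*ga" by (simp add: R1)
  finally have e: "R*(Q*A'*B' - Qi*B'*A') + C' = (R*(Q-Qi))*ga" .
  have c: "(R*(Q-Qi)) * x = x * (R*(Q-Qi))" for x
    using DQc Rc by (metis mult.assoc)
  show ?thesis unfolding e
    by (rule centr_comm[OF c]) (use X c_ga_A c_ga_B c_ga_C in auto)
qed

lemma Hal:
  assumes A1: "Ai * (Q - Qi) = 1"
  shows "Ai*(Q*B'*C' - Qi*C'*B') + (Q+Qi)*A' = al"
proof -
  have "Ai*(Q*B'*C' - Qi*C'*B') = (Ai*(Q - Qi))*(al - (Q+Qi)*A')" unfolding M1 by (simp add: mult.assoc)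
  then show ?thesis by (simp add: A1)
qed

lemma Hbe:
  assumes A1: "Ai * (Q - Qi) = 1"
  shows "Ai*(Q*C'*A' - Qi*A'*C') = be"
proof -
  have "Ai*(Q*C'*A' - Qi*A'*C') = (Ai*(Q - Qi))*be" unfolding M2 by (simp add: mult.assoc)
  then show ?thesis by (simp add: A1)
qed

lemma Hga:
  assumes A1: "Ai * (Q - Qi) = 1"
  shows "Ai*(Q*A'*B' - Qi*B'*A') + (Q+Qi)*C' = ga"
proof -
  have "Ai*(Q*A'*B' - Qi*B'*A') = (Ai*(Q - Qi))*(ga - (Q+Qi)*C')" unfolding M3 by (simp add: mult.assoc)
  then show ?thesis by (simp add: A1)
qed

end

locale wrels0 =
  fixes e1 f1 e2 f2 k1 k1i k2 k2i I Q Qi Ai :: "'a::{ring,monoid_mult}"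
  assumes Qc: "\<And>x. x * Q = Q * x" and Qic: "\<And>x. x * Qi = Qi * x" and QQi: "Q * Qi = 1"
  and Aic: "\<And>x. x * Ai = Ai * x" and QAi: "(Q - Qi) * Ai = 1"
  and IE1: "I * e1 = e1 * I" and IF1: "I * f1 = f1 * I" and IE2: "I * e2 = e2 * I" and IF2: "I * f2 = f2 * I"
  and IK1: "I * k1 = k1 * I" and IK1i: "I * k1i = k1i * I" and IK2: "I * k2 = k2 * I" and IK2i: "I * k2i = k2i * I"
  and K1K1i: "k1 * k1i = 1" and K1iK1: "k1i * k1 = 1" and K2K2i: "k2 * k2i = 1" and K2iK2: "k2i * k2 = 1"
  and K1E2: "k1 * e2 = e2 * k1" and K1F2: "k1 * f2 = f2 * k1" and K1K2: "k1 * k2 = k2 * k1"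
  and K2E1: "k2 * e1 = e1 * k2" and K2F1: "k2 * f1 = f1 * k2"
  and E1K1: "Q * e1 * k1 = Qi * k1 * e1" and K1F1: "Q * k1 * f1 = Qi * f1 * k1"
  and E2K2: "Q * e2 * k2 = Qi * k2 * e2" and K2F2: "Q * k2 * f2 = Qi * f2 * k2"
  and E1E2: "e1 * e2 = e2 * e1" and E1F2: "e1 * f2 = f2 * e1" and F1E2: "f1 * e2 = e2 * f1" and F1F2: "f1 * f2 = f2 * f1"
  and EF1: "e1 * f1 - f1 * e1 = Ai * (k1 - I * k1i)"
  and EF2: "e2 * f2 - f2 * e2 = Ai * (I * k2 - k2i)"
begin

lemma Dc: "x * (Q - Qi) = (Q - Qi) * x"
proof -
  have "x * (Q - Qi) = x*Q - x*Qi" by (rule right_diff_distrib)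
  also have "\<dots> = Q*x - Qi*x" using Qc[of x] Qic[of x] by simp
  also have "\<dots> = (Q - Qi)*x" by (rule left_diff_distrib[symmetric])
  finally show ?thesis .
qed

lemma Dc': "x * ((Q - Qi) * y) = (Q - Qi) * (x * y)"
  by (metis Dc mult.assoc)

lemmas Dcs = Dc'[of e1] Dc'[of f1] Dc'[of e2] Dc'[of f2] Dc'[of k1] Dc'[of k1i] Dc'[of k2] Dc'[of k2i]
  Dc'[of I] Dc'[of Q] Dc'[of Qi]

lemma shB: "(Q - Qi)^2 * (e1 + k1i*e2)*(f1*k2 + f2) = ((Q - Qi)*e1 + k1i*((Q - Qi)*e2)) * ((Q - Qi)*f1*k2 + (Q - Qi)*f2)"
  by (simp only: power2_eq_square mult.assoc distrib_left distrib_right Dcs add.assoc)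
lemma shC: "Q*(Q - Qi)^2 * e1 * f2 * k2i = Q * ((Q - Qi)*e1) * ((Q - Qi)*f2) * k2i"
  by (simp only: power2_eq_square mult.assoc Dcs)
lemma shL1: "(Q - Qi)^2 * e1 * f1 = (Q - Qi)*e1*((Q - Qi)*f1)"
  by (simp only: power2_eq_square mult.assoc Dcs)
lemma shL2: "(Q - Qi)^2 * e2 * f2 = (Q - Qi)*e2*((Q - Qi)*f2)"
  by (simp only: power2_eq_square mult.assoc Dcs)

lemma scaled: "wrels ((Q-Qi)*e1) ((Q-Qi)*f1) ((Q-Qi)*e2) ((Q-Qi)*f2) k1 k1i k2 k2i I Q Qi"
proof (unfold_locales)
  show "((Q-Qi)*e1) * ((Q-Qi)*f1) - ((Q-Qi)*f1) * ((Q-Qi)*e1) = (Q - Qi) * (k1 - I * k1i)"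
  proof -
    have "((Q-Qi)*e1) * ((Q-Qi)*f1) - ((Q-Qi)*f1) * ((Q-Qi)*e1) = (Q-Qi)*((Q-Qi)*(e1*f1 - f1*e1))"
      by (simp only: mult.assoc Dcs right_diff_distrib)
    also have "\<dots> = (Q-Qi)*(((Q-Qi)*Ai)*(k1 - I*k1i))" by (simp only: EF1 mult.assoc)
    also have "\<dots> = (Q-Qi)*(k1 - I*k1i)" by (simp add: QAi)
    finally show ?thesis .
  qed
  show "((Q-Qi)*e2) * ((Q-Qi)*f2) - ((Q-Qi)*f2) * ((Q-Qi)*e2) = (Q - Qi) * (I * k2 - k2i)"
  proof -
    have "((Q-Qi)*e2) * ((Q-Qi)*f2) - ((Q-Qi)*f2) * ((Q-Qi)*e2) = (Q-Qi)*((Q-Qi)*(e2*f2 - f2*e2))"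
      by (simp only: mult.assoc Dcs right_diff_distrib)
    also have "\<dots> = (Q-Qi)*(((Q-Qi)*Ai)*(I*k2 - k2i))" by (simp only: EF2 mult.assoc)
    also have "\<dots> = (Q-Qi)*(I*k2 - k2i)" by (simp add: QAi)
    finally show ?thesis .
  qed
qed (rule Qc | rule Qic | rule QQi | rule K1K1i | rule K1iK1 | rule K2K2i | rule K2iK2 | rule K1K2 |
     (simp only: mult.assoc Dcs IE1 IF1 IE2 IF2 IK1 IK1i IK2 IK2i K1E2 K1F2 K2E1 K2F1 E1E2 E1F2 F1E2 F1F2
        E1K1[simplified mult.assoc] K1F1[simplified mult.assoc] E2K2[simplified mult.assoc] K2F2[simplified mult.assoc]))+

end


lemma cst_add: "cst (a + b) = cst a + cst b" by (simp add: cst_def single_add)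
lemma cst_mult: "cst (a * b) = cst a * cst b" by (simp add: cst_def mult_single)
lemma cst_one: "cst 1 = 1" by (simp add: cst_def)
lemma cst_zero: "cst 0 = 0" by (simp add: cst_def)
lemma cst_uminus: "cst (- a) = - cst a" by (simp add: cst_def single_uminus)
lemma cst_diff: "cst (a - b) = cst a - cst b" by (simp add: cst_def single_diff)
lemma cst_power: "cst (a ^ n) = cst a ^ n" by (induct n) (simp_all add: cst_one cst_mult)

lemma pm_induct:
  assumes "P 0" and "\<And>w c f. P f \<Longrightarrow> P (Poly_Mapping.single w c + f)"
  shows "P x"
proof (induct x rule: update_induct)
  case const then show ?case using assms(1) .
next
  case (update f a b)
  have "Poly_Mapping.update a b f = Poly_Mapping.single a b + f"
    using update(1) by (intro poly_mapping_eqI) (auto simp: Poly_Mapping.lookup_update lookup_add lookup_single in_keys_iff when_def)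
  then show ?case using assms(2) update by simp
qed

lemma cst_comm_single: "cst c * Poly_Mapping.single w d = Poly_Mapping.single w d * cst c"
  by (simp add: cst_def mult_single mult.commute)

lemma cst_central: "cst c * x = x * cst c"
  by (induct x rule: pm_induct) (simp_all add: distrib_left distrib_right cst_comm_single)


fun wimg :: "('g \<Rightarrow> 'h freealg) \<Rightarrow> 'g word \<Rightarrow> 'h freealg" where
  "wimg g (Word ws) = prod_list (map g ws)"

lemma wimg_plus: "wimg g (a + b) = wimg g a * wimg g b"
  by (cases a; cases b) simp

lemma wimg_zero: "wimg g 0 = 1" by (simp add: zero_word_def)

definition subst :: "('g \<Rightarrow> 'h freealg) \<Rightarrow> 'g freealg \<Rightarrow> 'h freealg" where
  "subst g x = (\<Sum>w\<in>Poly_Mapping.keys x. cst (Poly_Mapping.lookup x w) * wimg g w)"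

lemma subst_superset:
  assumes "finite S" "Poly_Mapping.keys x \<subseteq> S"
  shows "subst g x = (\<Sum>w\<in>S. cst (Poly_Mapping.lookup x w) * wimg g w)"
  unfolding subst_def
  by (rule sum.mono_neutral_left) (use assms in \<open>auto simp: in_keys_iff cst_zero\<close>)

lemma subst_add: "subst g (x + y) = subst g x + subst g y"
proof -
  let ?S = "Poly_Mapping.keys x \<union> Poly_Mapping.keys y"
  have "subst g (x + y) = (\<Sum>w\<in>?S. cst (Poly_Mapping.lookup (x+y) w) * wimg g w)"
    by (rule subst_superset) (auto simp: keys_add)
  also have "\<dots> = (\<Sum>w\<in>?S. cst (Poly_Mapping.lookup x w) * wimg g w) + (\<Sum>w\<in>?S. cst (Poly_Mapping.lookup y w) * wimg g w)"
    by (simp add: lookup_add cst_add distrib_right sum.distrib)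
  also have "\<dots> = subst g x + subst g y"
    by (simp add: subst_superset[symmetric])
  finally show ?thesis .
qed

lemma subst_zero: "subst g 0 = 0" by (simp add: subst_def)

lemma subst_single: "subst g (Poly_Mapping.single w c) = cst c * wimg g w"
  by (subst subst_superset[of "{w}"]) (auto simp: lookup_single)

lemma subst_mult_single: "subst g (Poly_Mapping.single w c * y) = cst c * wimg g w * subst g y"
proof (induct y rule: pm_induct)
  case 1 then show ?case by (simp add: subst_zero)
next
  case (2 v d f)
  then show ?case
    by (simp add: distrib_left subst_add mult_single subst_single cst_mult wimg_plus mult.assoc)
       (metis cst_central mult.assoc)
qed

lemma subst_mult: "subst g (x * y) = subst g x * subst g y"
  by (induct x rule: pm_induct) (simp_all add: subst_zero subst_add distrib_right subst_mult_single subst_single)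

lemma subst_one: "subst g 1 = 1"
  using subst_single[of g 0 1] by (simp add: cst_one wimg_zero)

lemma subst_uminus: "subst g (- x) = - subst g x"
  using subst_add[of g x "- x"] by (simp add: subst_zero) (metis add.commute add_eq_0_iff2)

lemma subst_diff: "subst g (x - y) = subst g x - subst g y"
  using subst_add[of g x "- y"] by (simp add: subst_uminus)

lemma subst_cst: "subst g (cst c) = cst c"
  by (simp add: cst_def subst_single[unfolded cst_def] wimg_zero)

lemma subst_gen: "subst g (gen a) = g a"
  by (simp add: gen_def subst_single cst_one)

lemma qcomm_subst: "subst g (qcomm q x y) = qcomm q (subst g x) (subst g y)"
  by (simp add: qcomm_def subst_diff subst_mult subst_cst)
lemma comm_subst: "subst g (comm x y) = comm (subst g x) (subst g y)"
  by (simp add: comm_def subst_diff subst_mult)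

lemmas subst_simps = subst_add subst_mult subst_one subst_uminus subst_diff subst_cst subst_gen qcomm_subst comm_subst subst_zero


lemma FreeRing_ring: "ring (FreeRing :: 'g freealg ring)"
proof -
  have "\<exists>y. x + y = 0" for x :: "'g freealg"
    using add.right_inverse by blast
  thus ?thesis
    unfolding FreeRing_def using add.right_inverse
    by unfold_locales (auto simp: algebra_simps Units_def)
qed

lemma FreeRing_simps [simp]: "carrier FreeRing = UNIV" "mult FreeRing = (*)" "add FreeRing = (+)"
  "one FreeRing = 1" "zero FreeRing = 0"
  by (simp_all add: FreeRing_def)

lemma FreeRing_a_inv [simp]: "a_inv FreeRing x = - x"
  using abelian_group.minus_equality[OF ring.is_abelian_group[OF FreeRing_ring], of "-x" x] by simp

lemma FreeRing_a_minus [simp]: "a_minus FreeRing x y = x - y"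
  by (simp add: a_minus_def)

lemma idealG: "ideal (genideal FreeRing S) FreeRing"
  by (rule ring.genideal_ideal[OF FreeRing_ring]) simp

lemma memG: "r \<in> S \<Longrightarrow> r \<in> genideal FreeRing S"
  using ring.genideal_self[OF FreeRing_ring, of S] by auto

lemma G_zero: "0 \<in> genideal FreeRing S"
  using additive_subgroup.zero_closed[OF ideal.axioms(1)[OF idealG]] by simp
lemma G_add: "a \<in> genideal FreeRing S \<Longrightarrow> b \<in> genideal FreeRing S \<Longrightarrow> a + b \<in> genideal FreeRing S"
  using additive_subgroup.a_closed[OF ideal.axioms(1)[OF idealG]] by fastforce
lemma G_uminus: "a \<in> genideal FreeRing S \<Longrightarrow> - a \<in> genideal FreeRing S"
  using additive_subgroup.a_inv_closed[OF ideal.axioms(1)[OF idealG]] by fastforce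
lemma G_diff: "a \<in> genideal FreeRing S \<Longrightarrow> b \<in> genideal FreeRing S \<Longrightarrow> a - b \<in> genideal FreeRing S"
  using G_add[of a S "-b"] G_uminus[of b S] by simp
lemma G_lmult: "a \<in> genideal FreeRing S \<Longrightarrow> x * a \<in> genideal FreeRing S"
  using ideal.I_l_closed[OF idealG] by fastforce
lemma G_rmult: "a \<in> genideal FreeRing S \<Longrightarrow> a * x \<in> genideal FreeRing S"
  using ideal.I_r_closed[OF idealG] by fastforce

lemma cls_eq_iff: "a_r_coset FreeRing (genideal FreeRing S) x = a_r_coset FreeRing (genideal FreeRing S) y
   \<longleftrightarrow> x - y \<in> genideal FreeRing S"
  using ring.quotient_eq_iff_same_a_r_cos[OF FreeRing_ring idealG, of x y S] by simp

lemma quot_carrier: "carrier (FreeRing Quot (genideal FreeRing S)) = range (a_r_coset FreeRing (genideal FreeRing S))"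
  by (auto simp: FactRing_def A_RCOSETS_def' a_r_coset_def)

lemma cls_hom: "a_r_coset FreeRing (genideal FreeRing S) \<in> ring_hom FreeRing (FreeRing Quot (genideal FreeRing S))"
  using ideal.rcos_ring_hom[OF idealG] by (simp add: a_r_coset_def)

lemma cls_mult: "a_r_coset FreeRing (genideal FreeRing S) x \<otimes>\<^bsub>FreeRing Quot (genideal FreeRing S)\<^esub> a_r_coset FreeRing (genideal FreeRing S) y
   = a_r_coset FreeRing (genideal FreeRing S) (x * y)"
  using ring_hom_mult[OF cls_hom, of x y] by simp
lemma cls_add: "a_r_coset FreeRing (genideal FreeRing S) x \<oplus>\<^bsub>FreeRing Quot (genideal FreeRing S)\<^esub> a_r_coset FreeRing (genideal FreeRing S) y
   = a_r_coset FreeRing (genideal FreeRing S) (x + y)"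
  using ring_hom_add[OF cls_hom, of x y] by simp
lemma cls_one: "\<one>\<^bsub>FreeRing Quot (genideal FreeRing S)\<^esub> = a_r_coset FreeRing (genideal FreeRing S) 1"
  using ring_hom_one[OF cls_hom, of S] by simp


definition goodq :: "complex \<Rightarrow> bool" where
  "goodq q \<longleftrightarrow> q \<noteq> 0 \<and> (\<forall>n::nat. n > 0 \<longrightarrow> q ^ n \<noteq> 1)"

abbreviation JW :: "complex \<Rightarrow> genW freealg set" where
  "JW q \<equiv> genideal FreeRing (relsW q)"

definition wrel :: "(complex \<Rightarrow> genW freealg) \<Rightarrow> (complex \<Rightarrow> genW freealg) \<Rightarrow> bool" where
  "wrel f g \<longleftrightarrow> (\<forall>q. goodq q \<longrightarrow> f q - g q \<in> JW q)"

lemma wrel_refl: "wrel f f" by (simp add: wrel_def G_zero)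

lemma equivp_wrel: "equivp wrel"
proof (rule equivpI)
  show "reflp wrel" by (simp add: reflp_def wrel_refl)
  show "symp wrel" unfolding symp_def wrel_def
    using G_uminus by fastforce
  show "transp wrel" unfolding transp_def wrel_def
  proof (intro allI impI)
    fix f g h q assume "\<forall>q. goodq q \<longrightarrow> f q - g q \<in> JW q" "\<forall>q. goodq q \<longrightarrow> g q - h q \<in> JW q" "goodq q"
    then have "(f q - g q) + (g q - h q) \<in> JW q" by - (rule G_add, simp_all)
    then show "f q - h q \<in> JW q" by simp
  qed
qed

quotient_type wt = "complex \<Rightarrow> genW freealg" / wrel
  by (rule equivp_wrel)

instantiation wt :: "{ring, monoid_mult}"
begin
lift_definition zero_wt :: wt is "\<lambda>q. 0" .
lift_definition one_wt :: wt is "\<lambda>q. 1" .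
lift_definition plus_wt :: "wt \<Rightarrow> wt \<Rightarrow> wt" is "\<lambda>f g q. f q + g q"
  unfolding wrel_def
proof (intro allI impI)
  fix f f' g g' q assume "\<forall>q. goodq q \<longrightarrow> f q - f' q \<in> JW q" "\<forall>q. goodq q \<longrightarrow> g q - g' q \<in> JW q" "goodq q"
  then have "(f q - f' q) + (g q - g' q) \<in> JW q" by - (rule G_add, simp_all)
  then show "f q + g q - (f' q + g' q) \<in> JW q" by (simp add: algebra_simps)
qed
lift_definition uminus_wt :: "wt \<Rightarrow> wt" is "\<lambda>f q. - f q"
  unfolding wrel_def
proof (intro allI impI)
  fix f f' q assume "\<forall>q. goodq q \<longrightarrow> f q - f' q \<in> JW q" "goodq q"
  then have "- (f q - f' q) \<in> JW q" by - (rule G_uminus, simp)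
  then show "- f q - - f' q \<in> JW q" by (simp add: algebra_simps)
qed
lift_definition minus_wt :: "wt \<Rightarrow> wt \<Rightarrow> wt" is "\<lambda>f g q. f q - g q"
  unfolding wrel_def
proof (intro allI impI)
  fix f f' g g' q assume "\<forall>q. goodq q \<longrightarrow> f q - f' q \<in> JW q" "\<forall>q. goodq q \<longrightarrow> g q - g' q \<in> JW q" "goodq q"
  then have "(f q - f' q) - (g q - g' q) \<in> JW q" by - (rule G_diff, simp_all)
  then show "f q - g q - (f' q - g' q) \<in> JW q" by (simp add: algebra_simps)
qed
lift_definition times_wt :: "wt \<Rightarrow> wt \<Rightarrow> wt" is "\<lambda>f g q. f q * g q"
proof -
  fix f f' g g' assume "wrel f f'" "wrel g g'"
  then show "wrel (\<lambda>q. f q * g q) (\<lambda>q. f' q * g' q)" unfolding wrel_def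
  proof (intro allI impI)
    fix q assume h1: "\<forall>q. goodq q \<longrightarrow> f q - f' q \<in> JW q" and h2: "\<forall>q. goodq q \<longrightarrow> g q - g' q \<in> JW q"
      and h3: "goodq q"
    have "(f q - f' q) * g q + f' q * (g q - g' q) \<in> JW q"
      using G_add[OF G_rmult[of "f q - f' q" "relsW q" "g q"] G_lmult[of "g q - g' q" "relsW q" "f' q"]] h1 h2 h3 by simp
    then show "f q * g q - f' q * g' q \<in> JW q" by (simp add: algebra_simps)
  qed
qed
instance
  by standard (transfer; simp add: algebra_simps wrel_refl)+
end


lemma abs_add: "abs_wt (\<lambda>q. f q + g q) = abs_wt f + abs_wt g"
  by (simp add: plus_wt.abs_eq wrel_refl)
lemma abs_mult: "abs_wt (\<lambda>q. f q * g q) = abs_wt f * abs_wt g"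
  by (simp add: times_wt.abs_eq wrel_refl)
lemma abs_diff: "abs_wt (\<lambda>q. f q - g q) = abs_wt f - abs_wt g"
  by (simp add: minus_wt.abs_eq wrel_refl)
lemma abs_uminus: "abs_wt (\<lambda>q. - f q) = - abs_wt f"
  by (simp add: uminus_wt.abs_eq wrel_refl)
lemma abs_one: "abs_wt (\<lambda>q. 1) = 1"
  by (simp add: one_wt_def)
lemma abs_zero: "abs_wt (\<lambda>q. 0) = 0"
  by (simp add: zero_wt_def)
lemma abs_power: "abs_wt (\<lambda>q. f q ^ n) = abs_wt f ^ n"
  by (induct n) (simp_all add: abs_one abs_mult)

lemma abs_eqI: "(\<And>q. goodq q \<Longrightarrow> f q = g q) \<Longrightarrow> abs_wt f = abs_wt g"
  by (simp add: wt.abs_eq_iff wrel_def G_zero)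
lemma abs_zeroI: "(\<And>q. goodq q \<Longrightarrow> f q \<in> JW q) \<Longrightarrow> abs_wt f = 0"
  unfolding abs_zero[symmetric] by (simp add: wt.abs_eq_iff wrel_def)
lemma abs_eqD: "abs_wt f = abs_wt g \<Longrightarrow> goodq q \<Longrightarrow> f q - g q \<in> JW q"
  by (simp add: wt.abs_eq_iff wrel_def)
lemma abs_zeroD: "abs_wt f = 0 \<Longrightarrow> goodq q \<Longrightarrow> f q \<in> JW q"
  using abs_eqD[of f "\<lambda>q. 0" q] by (simp add: abs_zero)

definition tg :: "genW \<Rightarrow> wt" where "tg x = abs_wt (\<lambda>q. gen x)"
definition Sc :: "(complex \<Rightarrow> complex) \<Rightarrow> wt" where "Sc c = abs_wt (\<lambda>q. cst (c q))"

lemma abs_gen: "abs_wt (\<lambda>q. gen x) = tg x" by (simp add: tg_def)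
lemma abs_cst: "abs_wt (\<lambda>q. cst (c q)) = Sc c" by (simp add: Sc_def)

definition "Qt = Sc (\<lambda>q. q)"
definition "Qit = Sc (\<lambda>q. inverse q)"
definition "Ait = Sc (\<lambda>q. inverse (q - inverse q))"

lemma Sc_Qt: "Sc (\<lambda>q. q) = Qt" by (simp add: Qt_def)
lemma Sc_Qit: "Sc inverse = Qit" by (simp add: Qit_def)

lemmas abs_simps = abs_add abs_mult abs_diff abs_uminus abs_one abs_zero abs_power abs_gen
  cst_add cst_mult cst_diff cst_uminus cst_power cst_one cst_zero abs_cst Sc_Qt Sc_Qit

lemma Sc_central: "Sc c * x = x * Sc c"
proof (induct x rule: wt.abs_induct)
  case (1 f)
  have "Sc c * abs_wt f = abs_wt (\<lambda>q. cst (c q) * f q)" by (simp add: abs_mult Sc_def)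
  also have "\<dots> = abs_wt (\<lambda>q. f q * cst (c q))" by (simp add: cst_central)
  also have "\<dots> = abs_wt f * Sc c" by (simp add: abs_mult Sc_def)
  finally show ?case .
qed

lemma Sc_mult: "Sc c * Sc d = Sc (\<lambda>q. c q * d q)"
  by (simp add: Sc_def abs_mult[symmetric] cst_mult)
lemma Sc_diff: "Sc c - Sc d = Sc (\<lambda>q. c q - d q)"
  by (simp add: Sc_def abs_diff[symmetric] cst_diff)
lemma Sc_add: "Sc c + Sc d = Sc (\<lambda>q. c q + d q)"
  by (simp add: Sc_def abs_add[symmetric] cst_add)
lemma Sc_one: "(\<And>q. goodq q \<Longrightarrow> c q = 1) \<Longrightarrow> Sc c = 1"
  unfolding Sc_def abs_one[symmetric] by (rule abs_eqI) (simp add: cst_one)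

lemma goodq_facts:
  assumes "goodq q"
  shows "q \<noteq> 0" "q - inverse q \<noteq> 0" "q + inverse q \<noteq> 0" "q^2 - inverse (q^2) \<noteq> 0"
proof -
  have q0: "q \<noteq> 0" and q2: "q^2 \<noteq> 1" and q4: "q^4 \<noteq> 1" using assms by (auto simp: goodq_def)
  show "q \<noteq> 0" by fact
  show "q - inverse q \<noteq> 0"
  proof
    assume "q - inverse q = 0"
    then have "q * q = 1" using q0 by (simp add: field_simps)
    then show False using q2 by (simp add: power2_eq_square)
  qed
  show "q + inverse q \<noteq> 0"
  proof
    assume "q + inverse q = 0"
    then have "1 + q * q = 0" using q0 by (simp add: field_simps)
    then have "q * q = -1" by (metis add_eq_0_iff)
    then have "q^4 = 1" by (metis power2_eq_square power_mult mult_minus1 num_double numeral_times_numeral power_minus1_even power2_minus power_one)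
    then show False using q4 by simp
  qed
  show "q^2 - inverse (q^2) \<noteq> 0"
  proof
    assume "q^2 - inverse (q^2) = 0"
    then have "q^2 * q^2 = 1" using q0 by (simp add: field_simps)
    then have "q^4 = 1" by (simp add: power_add[symmetric])
    then show False using q4 by simp
  qed
qed

lemma QQit: "Qt * Qit = 1"
  unfolding Qt_def Qit_def Sc_mult by (rule Sc_one) (simp add: goodq_facts)
lemma QAit: "(Qt - Qit) * Ait = 1"
  unfolding Qt_def Qit_def Ait_def Sc_mult Sc_diff by (rule Sc_one) (rule right_inverse, rule goodq_facts(2))

lemma relW0: "(\<And>q. r q \<in> relsW q) \<Longrightarrow> abs_wt r = 0"
  by (rule abs_zeroI) (rule memG)


lemma Sc_Ait: "Sc (\<lambda>q. inverse (q - inverse q)) = Ait" by (simp add: Ait_def)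

lemma t_IE1: "tg II * tg E1 = tg E1 * tg II"
proof -
  have "abs_wt (\<lambda>q. comm (gen II) (gen E1)) = 0" by (rule relW0) (auto simp: relsW_def)
  then show ?thesis by (simp add: comm_def qcomm_def abs_simps Sc_Ait)
qed

lemma t_IF1: "tg II * tg F1 = tg F1 * tg II"
proof -
  have "abs_wt (\<lambda>q. comm (gen II) (gen F1)) = 0" by (rule relW0) (auto simp: relsW_def)
  then show ?thesis by (simp add: comm_def qcomm_def abs_simps Sc_Ait)
qed

lemma t_IE2: "tg II * tg E2 = tg E2 * tg II"
proof -
  have "abs_wt (\<lambda>q. comm (gen II) (gen E2)) = 0" by (rule relW0) (auto simp: relsW_def)
  then show ?thesis by (simp add: comm_def qcomm_def abs_simps Sc_Ait)
qed

lemma t_IF2: "tg II * tg F2 = tg F2 * tg II"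
proof -
  have "abs_wt (\<lambda>q. comm (gen II) (gen F2)) = 0" by (rule relW0) (auto simp: relsW_def)
  then show ?thesis by (simp add: comm_def qcomm_def abs_simps Sc_Ait)
qed

lemma t_IK1: "tg II * tg K1 = tg K1 * tg II"
proof -
  have "abs_wt (\<lambda>q. comm (gen II) (gen K1)) = 0" by (rule relW0) (auto simp: relsW_def)
  then show ?thesis by (simp add: comm_def qcomm_def abs_simps Sc_Ait)
qed

lemma t_IK1i: "tg II * tg K1i = tg K1i * tg II"
proof -
  have "abs_wt (\<lambda>q. comm (gen II) (gen K1i)) = 0" by (rule relW0) (auto simp: relsW_def)
  then show ?thesis by (simp add: comm_def qcomm_def abs_simps Sc_Ait)
qed

lemma t_IK2: "tg II * tg K2 = tg K2 * tg II"
proof -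
  have "abs_wt (\<lambda>q. comm (gen II) (gen K2)) = 0" by (rule relW0) (auto simp: relsW_def)
  then show ?thesis by (simp add: comm_def qcomm_def abs_simps Sc_Ait)
qed

lemma t_IK2i: "tg II * tg K2i = tg K2i * tg II"
proof -
  have "abs_wt (\<lambda>q. comm (gen II) (gen K2i)) = 0" by (rule relW0) (auto simp: relsW_def)
  then show ?thesis by (simp add: comm_def qcomm_def abs_simps Sc_Ait)
qed

lemma t_K1K1i: "tg K1 * tg K1i = 1"
proof -
  have "abs_wt (\<lambda>q. gen K1 * gen K1i - 1) = 0" by (rule relW0) (auto simp: relsW_def)
  then show ?thesis by (simp add: comm_def qcomm_def abs_simps Sc_Ait)
qed

lemma t_K1iK1: "tg K1i * tg K1 = 1"
proof -
  have "abs_wt (\<lambda>q. gen K1i * gen K1 - 1) = 0" by (rule relW0) (auto simp: relsW_def)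
  then show ?thesis by (simp add: comm_def qcomm_def abs_simps Sc_Ait)
qed

lemma t_K2K2i: "tg K2 * tg K2i = 1"
proof -
  have "abs_wt (\<lambda>q. gen K2 * gen K2i - 1) = 0" by (rule relW0) (auto simp: relsW_def)
  then show ?thesis by (simp add: comm_def qcomm_def abs_simps Sc_Ait)
qed

lemma t_K2iK2: "tg K2i * tg K2 = 1"
proof -
  have "abs_wt (\<lambda>q. gen K2i * gen K2 - 1) = 0" by (rule relW0) (auto simp: relsW_def)
  then show ?thesis by (simp add: comm_def qcomm_def abs_simps Sc_Ait)
qed

lemma t_K1E2: "tg K1 * tg E2 = tg E2 * tg K1"
proof -
  have "abs_wt (\<lambda>q. comm (gen K1) (gen E2)) = 0" by (rule relW0) (auto simp: relsW_def)
  then show ?thesis by (simp add: comm_def qcomm_def abs_simps Sc_Ait)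
qed

lemma t_K1F2: "tg K1 * tg F2 = tg F2 * tg K1"
proof -
  have "abs_wt (\<lambda>q. comm (gen K1) (gen F2)) = 0" by (rule relW0) (auto simp: relsW_def)
  then show ?thesis by (simp add: comm_def qcomm_def abs_simps Sc_Ait)
qed

lemma t_K1K2: "tg K1 * tg K2 = tg K2 * tg K1"
proof -
  have "abs_wt (\<lambda>q. comm (gen K1) (gen K2)) = 0" by (rule relW0) (auto simp: relsW_def)
  then show ?thesis by (simp add: comm_def qcomm_def abs_simps Sc_Ait)
qed

lemma t_K2E1: "tg K2 * tg E1 = tg E1 * tg K2"
proof -
  have "abs_wt (\<lambda>q. comm (gen K2) (gen E1)) = 0" by (rule relW0) (auto simp: relsW_def)
  then show ?thesis by (simp add: comm_def qcomm_def abs_simps Sc_Ait)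
qed

lemma t_K2F1: "tg K2 * tg F1 = tg F1 * tg K2"
proof -
  have "abs_wt (\<lambda>q. comm (gen K2) (gen F1)) = 0" by (rule relW0) (auto simp: relsW_def)
  then show ?thesis by (simp add: comm_def qcomm_def abs_simps Sc_Ait)
qed

lemma t_E1K1: "Qt * tg E1 * tg K1 = Qit * tg K1 * tg E1"
proof -
  have "abs_wt (\<lambda>q. qcomm q (gen E1) (gen K1)) = 0" by (rule relW0) (auto simp: relsW_def)
  then show ?thesis by (simp add: comm_def qcomm_def abs_simps Sc_Ait)
qed

lemma t_K1F1: "Qt * tg K1 * tg F1 = Qit * tg F1 * tg K1"
proof -
  have "abs_wt (\<lambda>q. qcomm q (gen K1) (gen F1)) = 0" by (rule relW0) (auto simp: relsW_def)
  then show ?thesis by (simp add: comm_def qcomm_def abs_simps Sc_Ait)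
qed

lemma t_E2K2: "Qt * tg E2 * tg K2 = Qit * tg K2 * tg E2"
proof -
  have "abs_wt (\<lambda>q. qcomm q (gen E2) (gen K2)) = 0" by (rule relW0) (auto simp: relsW_def)
  then show ?thesis by (simp add: comm_def qcomm_def abs_simps Sc_Ait)
qed

lemma t_K2F2: "Qt * tg K2 * tg F2 = Qit * tg F2 * tg K2"
proof -
  have "abs_wt (\<lambda>q. qcomm q (gen K2) (gen F2)) = 0" by (rule relW0) (auto simp: relsW_def)
  then show ?thesis by (simp add: comm_def qcomm_def abs_simps Sc_Ait)
qed

lemma t_E1E2: "tg E1 * tg E2 = tg E2 * tg E1"
proof -
  have "abs_wt (\<lambda>q. comm (gen E1) (gen E2)) = 0" by (rule relW0) (auto simp: relsW_def)
  then show ?thesis by (simp add: comm_def qcomm_def abs_simps Sc_Ait)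
qed

lemma t_E1F2: "tg E1 * tg F2 = tg F2 * tg E1"
proof -
  have "abs_wt (\<lambda>q. comm (gen E1) (gen F2)) = 0" by (rule relW0) (auto simp: relsW_def)
  then show ?thesis by (simp add: comm_def qcomm_def abs_simps Sc_Ait)
qed

lemma t_F1E2: "tg F1 * tg E2 = tg E2 * tg F1"
proof -
  have "abs_wt (\<lambda>q. comm (gen F1) (gen E2)) = 0" by (rule relW0) (auto simp: relsW_def)
  then show ?thesis by (simp add: comm_def qcomm_def abs_simps Sc_Ait)
qed

lemma t_F1F2: "tg F1 * tg F2 = tg F2 * tg F1"
proof -
  have "abs_wt (\<lambda>q. comm (gen F1) (gen F2)) = 0" by (rule relW0) (auto simp: relsW_def)
  then show ?thesis by (simp add: comm_def qcomm_def abs_simps Sc_Ait)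
qed

lemma t_EF1: "tg E1 * tg F1 - tg F1 * tg E1 = Ait * (tg K1 - tg II * tg K1i)"
proof -
  have "abs_wt (\<lambda>q. comm (gen E1) (gen F1) - cst (inverse (q - inverse q)) * (gen K1 - gen II * gen K1i)) = 0" by (rule relW0) (auto simp: relsW_def)
  then show ?thesis by (simp add: comm_def qcomm_def abs_simps Sc_Ait)
qed

lemma t_EF2: "tg E2 * tg F2 - tg F2 * tg E2 = Ait * (tg II * tg K2 - tg K2i)"
proof -
  have "abs_wt (\<lambda>q. comm (gen E2) (gen F2) - cst (inverse (q - inverse q)) * (gen II * gen K2 - gen K2i)) = 0" by (rule relW0) (auto simp: relsW_def)
  then show ?thesis by (simp add: comm_def qcomm_def abs_simps Sc_Ait)
qed

interpretation W0: wrels0 "tg E1" "tg F1" "tg E2" "tg F2" "tg K1" "tg K1i" "tg K2" "tg K2i" "tg II" Qt Qit Ait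
proof (unfold_locales)
  show "\<And>x. x * Qt = Qt * x" by (simp add: Qt_def Sc_central)
  show "\<And>x. x * Qit = Qit * x" by (simp add: Qit_def Sc_central)
  show "\<And>x. x * Ait = Ait * x" by (simp add: Ait_def Sc_central)
qed (simp_all add: QQit QAit t_IE1 t_IF1 t_IE2 t_IF2 t_IK1 t_IK1i t_IK2 t_IK2i t_K1K1i t_K1iK1 t_K2K2i t_K2iK2 t_K1E2 t_K1F2 t_K1K2 t_K2E1 t_K2F1 t_E1K1 t_K1F1 t_E2K2 t_K2F2 t_E1E2 t_E1F2 t_F1E2 t_F1F2 t_EF1 t_EF2)

interpretation WS: wrels "(Qt-Qit)*tg E1" "(Qt-Qit)*tg F1" "(Qt-Qit)*tg E2" "(Qt-Qit)*tg F2" "tg K1" "tg K1i" "tg K2" "tg K2i" "tg II" Qt Qit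
  by (rule W0.scaled)


definition imgs :: "complex \<Rightarrow> genH \<Rightarrow> genW freealg" where
 "imgs q x = (case x of GA \<Rightarrow> gen K2i
    | GB \<Rightarrow> cst ((q - inverse q)^2) * (gen E1 + gen K1i * gen E2) * (gen F1 * gen K2 + gen F2)
            + cst (inverse q) * gen K1 * gen K2 + cst q * gen K1i * gen K2i
    | GC \<Rightarrow> gen II * gen K1i - cst (q * (q - inverse q)^2) * gen E1 * gen F2 * gen K2i)"

lemma TA: "abs_wt (\<lambda>q. imgs q GA) = WS.A'"
  by (simp add: imgs_def abs_simps WS.A'_def)

lemma TB: "abs_wt (\<lambda>q. imgs q GB) = WS.B'"
  by (simp add: imgs_def abs_simps WS.B'_def W0.shB)

lemma TC: "abs_wt (\<lambda>q. imgs q GC) = WS.C'"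
  by (simp add: imgs_def abs_simps WS.C'_def W0.shC)

lemma TL1: "abs_wt (\<lambda>q. Lambda1 q) = WS.L1"
  by (simp add: Lambda1_def[abs_def] abs_simps WS.L1_def W0.shL1)
lemma TL2: "abs_wt (\<lambda>q. Lambda2 q) = WS.L2"
  by (simp add: Lambda2_def[abs_def] abs_simps WS.L2_def W0.shL2)


definition "Rt = Sc (\<lambda>q. inverse (q^2 - inverse (q^2)))"

lemma Rt_central: "Rt * x = x * Rt" by (simp add: Rt_def Sc_central)

lemma Rt1: "Rt * ((Qt - Qit) * (Qt + Qit)) = 1"
  unfolding Rt_def Qt_def Qit_def Sc_mult Sc_diff Sc_add
proof (rule Sc_one)
  fix q :: complex assume g: "goodq q"
  have "(q - inverse q) * (q + inverse q) = q^2 - inverse (q^2)"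
    by (simp add: algebra_simps power2_eq_square power_inverse)
  then show "inverse (q^2 - inverse (q^2)) * ((q - inverse q) * (q + inverse q)) = 1"
    using goodq_facts(4)[OF g] by simp
qed

lemma Ait1: "Ait * (Qt - Qit) = 1"
  using QAit by (simp add: Ait_def Sc_central)

lemma TY: "abs_wt (\<lambda>q. imgs q Y) \<in> {WS.A', WS.B', WS.C'}"
  by (cases Y) (simp_all add: TA TB TC)

lemma TH1: "abs_wt (\<lambda>q. subst (imgs q) (comm (cst (inverse (q^2 - inverse (q^2))) * qcomm q (gen GB) (gen GC) + gen GA) (gen Y))) = 0"
  apply (simp only: subst_simps)
  using WS.H1[OF Rt_central Rt1 TY[of Y]]
  by (simp add: comm_def qcomm_def abs_simps TA TB TC Rt_def[symmetric])

lemma TH2: "abs_wt (\<lambda>q. subst (imgs q) (comm (qcomm q (gen GC) (gen GA)) (gen Y))) = 0"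
  apply (simp only: subst_simps)
  using WS.H2[OF TY[of Y]]
  by (simp add: comm_def qcomm_def abs_simps TA TB TC)

lemma TH3: "abs_wt (\<lambda>q. subst (imgs q) (comm (cst (inverse (q^2 - inverse (q^2))) * qcomm q (gen GA) (gen GB) + gen GC) (gen Y))) = 0"
  apply (simp only: subst_simps)
  using WS.H3[OF Rt_central Rt1 TY[of Y]]
  by (simp add: comm_def qcomm_def abs_simps TA TB TC Rt_def[symmetric])

lemma Tal: "abs_wt (\<lambda>q. subst (imgs q) (alphaH q)) = abs_wt (\<lambda>q. Lambda2 q + Lambda1 q * gen K1i * gen K2i)"
  apply (simp only: subst_simps alphaH_def)
  using WS.Hal[OF Ait1]
  by (simp add: qcomm_def abs_simps TA TB TC TL1 TL2 Sc_Ait WS.al_def)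

lemma Tbe: "abs_wt (\<lambda>q. subst (imgs q) (betaH q)) = abs_wt (\<lambda>q. gen II * gen K1i * gen K2i)"
  apply (simp only: subst_simps betaH_def)
  using WS.Hbe[OF Ait1]
  by (simp add: qcomm_def abs_simps TA TB TC Sc_Ait WS.be_def)

lemma Tga: "abs_wt (\<lambda>q. subst (imgs q) (gammaH q)) = abs_wt (\<lambda>q. Lambda1 q + Lambda2 q * gen K1i * gen K2i)"
  apply (simp only: subst_simps gammaH_def)
  using WS.Hga[OF Ait1]
  by (simp add: qcomm_def abs_simps TA TB TC TL1 TL2 Sc_Ait WS.ga_def)


lemma sig_hom: "subst g \<in> ring_hom FreeRing FreeRing"
  by (rule ring_hom_memI) (simp_all add: subst_mult subst_add subst_one)

lemma sig_hom_ring: "ring_hom_ring FreeRing FreeRing (subst g)"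
  by (rule ring_hom_ring.intro[OF FreeRing_ring FreeRing_ring]) (rule ring_hom_ring_axioms.intro[OF sig_hom])

lemma relsH_in:
  assumes g: "goodq q" and r: "r \<in> relsH q"
  shows "subst (imgs q) r \<in> JW q"
proof -
  let ?t1 = "\<lambda>X. comm (cst (inverse (q^2 - inverse (q^2))) * qcomm q (gen GB) (gen GC) + gen GA) X"
  let ?t2 = "\<lambda>X. comm (qcomm q (gen GC) (gen GA)) X"
  let ?t3 = "\<lambda>X. comm (cst (inverse (q^2 - inverse (q^2))) * qcomm q (gen GA) (gen GB) + gen GC) X"
  from r have "\<exists>X\<in>{gen GA, gen GB, gen GC}. r \<in> {?t1 X, ?t2 X, ?t3 X}"
    unfolding relsH_def by (simp only: UN_iff)
  then obtain X where X: "X \<in> {gen GA, gen GB, gen GC}" and rX: "r \<in> {?t1 X, ?t2 X, ?t3 X}"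
    by (rule bexE)
  from X obtain Y where XY: "X = gen Y" by blast
  have h1: "subst (imgs q) (?t1 (gen Y)) \<in> JW q" by (rule abs_zeroD[OF TH1[of Y] g])
  have h2: "subst (imgs q) (?t2 (gen Y)) \<in> JW q" by (rule abs_zeroD[OF TH2[of Y] g])
  have h3: "subst (imgs q) (?t3 (gen Y)) \<in> JW q" by (rule abs_zeroD[OF TH3[of Y] g])
  from rX have "r = ?t1 X \<or> r = ?t2 X \<or> r = ?t3 X" by (simp only: insert_iff empty_iff simp_thms)
  then show ?thesis using h1 h2 h3 unfolding XY by (elim disjE) simp_all
qed

lemma JH_sub:
  assumes g: "goodq q"
  shows "genideal FreeRing (relsH q) \<subseteq> {r \<in> carrier FreeRing. subst (imgs q) r \<in> JW q}"
  by (rule ring.genideal_minimal[OF FreeRing_ring ring_hom_ring.ideal_vimage[OF sig_hom_ring idealG]])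
     (use relsH_in[OF g] in auto)

lemma wd:
  assumes g: "goodq q" and e: "clsH q x = clsH q y"
  shows "clsW q (subst (imgs q) x) = clsW q (subst (imgs q) y)"
proof -
  have "x - y \<in> genideal FreeRing (relsH q)" using e by (simp add: clsH_def cls_eq_iff)
  then have "subst (imgs q) (x - y) \<in> JW q" using JH_sub[OF g] by auto
  then show ?thesis by (simp add: clsW_def cls_eq_iff subst_diff)
qed

definition fW :: "complex \<Rightarrow> genH freealg set \<Rightarrow> genW freealg set" where
  "fW q X = clsW q (subst (imgs q) (SOME x. X = clsH q x))"

lemma fW_cls:
  assumes g: "goodq q"
  shows "fW q (clsH q x) = clsW q (subst (imgs q) x)"
proof -
  have "clsH q x = clsH q (SOME y. clsH q x = clsH q y)"
    by (rule someI[of "\<lambda>y. clsH q x = clsH q y" x]) (rule refl)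
  then show ?thesis unfolding fW_def by (rule wd[OF g, symmetric])
qed

lemma carrier_Hq: "carrier (Hq q) = range (clsH q)"
  by (simp add: Hq_def clsH_def quot_carrier)
lemma carrier_Wq: "carrier (Wq q) = range (clsW q)"
  by (simp add: Wq_def clsW_def quot_carrier)
lemma multH: "clsH q x \<otimes>\<^bsub>Hq q\<^esub> clsH q y = clsH q (x * y)"
  by (simp add: Hq_def clsH_def cls_mult)
lemma addH: "clsH q x \<oplus>\<^bsub>Hq q\<^esub> clsH q y = clsH q (x + y)"
  by (simp add: Hq_def clsH_def cls_add)
lemma oneH: "\<one>\<^bsub>Hq q\<^esub> = clsH q 1"
  by (simp add: Hq_def clsH_def cls_one)
lemma multW: "clsW q x \<otimes>\<^bsub>Wq q\<^esub> clsW q y = clsW q (x * y)"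
  by (simp add: Wq_def clsW_def cls_mult)
lemma addW: "clsW q x \<oplus>\<^bsub>Wq q\<^esub> clsW q y = clsW q (x + y)"
  by (simp add: Wq_def clsW_def cls_add)
lemma oneW: "\<one>\<^bsub>Wq q\<^esub> = clsW q 1"
  by (simp add: Wq_def clsW_def cls_one)
lemma ring_Hq: "ring (Hq q)" by (simp add: Hq_def ideal.quotient_is_ring[OF idealG])
lemma ring_Wq: "ring (Wq q)" by (simp add: Wq_def ideal.quotient_is_ring[OF idealG])
lemma zeroH: "\<zero>\<^bsub>Hq q\<^esub> = clsH q 0"
  using ring_hom_zero[OF cls_hom[of "relsH q"] FreeRing_ring ideal.quotient_is_ring[OF idealG]]
  by (simp add: Hq_def clsH_def)

lemma fW_hom:
  assumes g: "goodq q"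
  shows "fW q \<in> ring_hom (Hq q) (Wq q)"
proof (rule ring_hom_memI)
  fix X assume "X \<in> carrier (Hq q)"
  then obtain x where "X = clsH q x" by (auto simp: carrier_Hq)
  then show "fW q X \<in> carrier (Wq q)" by (simp add: fW_cls[OF g] carrier_Wq)
next
  fix X Y assume "X \<in> carrier (Hq q)" "Y \<in> carrier (Hq q)"
  then obtain x y where xy: "X = clsH q x" "Y = clsH q y" by (auto simp: carrier_Hq)
  show "fW q (X \<otimes>\<^bsub>Hq q\<^esub> Y) = fW q X \<otimes>\<^bsub>Wq q\<^esub> fW q Y"
    unfolding xy multH fW_cls[OF g] multW subst_mult ..
  show "fW q (X \<oplus>\<^bsub>Hq q\<^esub> Y) = fW q X \<oplus>\<^bsub>Wq q\<^esub> fW q Y"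
    unfolding xy addH fW_cls[OF g] addW subst_add ..
next
  show "fW q \<one>\<^bsub>Hq q\<^esub> = \<one>\<^bsub>Wq q\<^esub>"
    unfolding oneH fW_cls[OF g] oneW subst_one ..
qed

lemma zeroW: "\<zero>\<^bsub>Wq q\<^esub> = clsW q 0"
  using ring_hom_zero[OF cls_hom[of "relsW q"] FreeRing_ring ideal.quotient_is_ring[OF idealG]]
  by (simp add: Wq_def clsW_def)

lemma clsH_in: "clsH q x \<in> carrier (Hq q)" by (simp add: carrier_Hq)

lemma single_cons: "Poly_Mapping.single (Word (a # ws)) c = gen a * Poly_Mapping.single (Word ws) c"
  by (simp add: gen_def mult_single)

lemma hom_determined:
  assumes g: "goodq q" and hom: "f \<in> ring_hom (Hq q) (Wq q)"
    and sc: "\<And>c. f (clsH q (cst c)) = clsW q (cst c)"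
    and gens: "\<And>Y. f (clsH q (gen Y)) = clsW q (imgs q Y)"
  shows "f (clsH q x) = clsW q (subst (imgs q) x)"
proof -
  have sing: "f (clsH q (Poly_Mapping.single (Word ws) c)) = clsW q (subst (imgs q) (Poly_Mapping.single (Word ws) c))" for ws c
  proof (induct ws)
    case Nil
    have "Poly_Mapping.single (Word []) c = cst c" by (simp add: cst_def zero_word_def)
    then show ?case using sc[of c] subst_cst[of "imgs q" c] by metis
  next
    case (Cons a ws)
    have "f (clsH q (Poly_Mapping.single (Word (a # ws)) c))
        = f (clsH q (gen a) \<otimes>\<^bsub>Hq q\<^esub> clsH q (Poly_Mapping.single (Word ws) c))"
      by (simp add: single_cons multH)
    also have "\<dots> = f (clsH q (gen a)) \<otimes>\<^bsub>Wq q\<^esub> f (clsH q (Poly_Mapping.single (Word ws) c))"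
      by (rule ring_hom_mult[OF hom clsH_in clsH_in])
    also have "\<dots> = clsW q (subst (imgs q) (Poly_Mapping.single (Word (a # ws)) c))"
      by (simp add: gens Cons multW single_cons subst_mult subst_gen)
    finally show ?case .
  qed
  show ?thesis
  proof (induct x rule: pm_induct)
    case 1
    have "f (clsH q 0) = \<zero>\<^bsub>Wq q\<^esub>"
      using ring_hom_zero[OF hom ring_Hq ring_Wq] by (simp add: zeroH)
    then show ?case by (simp add: zeroW subst_zero)
  next
    case (2 w c h)
    obtain ws where w: "w = Word ws" by (cases w)
    have "f (clsH q (Poly_Mapping.single w c + h)) = f (clsH q (Poly_Mapping.single w c) \<oplus>\<^bsub>Hq q\<^esub> clsH q h)"
      by (simp add: addH)
    also have "\<dots> = f (clsH q (Poly_Mapping.single w c)) \<oplus>\<^bsub>Wq q\<^esub> f (clsH q h)"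
      by (rule ring_hom_add[OF hom clsH_in clsH_in])
    also have "\<dots> = clsW q (subst (imgs q) (Poly_Mapping.single w c + h))"
      by (simp add: w sing 2 addW subst_add)
    finally show ?case .
  qed
qed

lemma cls_from_abs:
  assumes "abs_wt (\<lambda>q. a q) = abs_wt (\<lambda>q. b q)" "goodq q"
  shows "clsW q (a q) = clsW q (b q)"
  using abs_eqD[OF assms] by (simp add: clsW_def cls_eq_iff)

theorem mainTheorem5:
  fixes q :: complex
  assumes "q \<noteq> 0" and "\<forall>n::nat. n > 0 \<longrightarrow> q ^ n \<noteq> 1"
  defines "P \<equiv> (\<lambda>f. alg_hom_HW q f
      \<and> f (clsH q (gen GA)) = clsW q (gen K2i)
      \<and> f (clsH q (gen GB)) = clsW q
           (cst ((q - inverse q)^2) * (gen E1 + gen K1i * gen E2) * (gen F1 * gen K2 + gen F2)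
            + cst (inverse q) * gen K1 * gen K2 + cst q * gen K1i * gen K2i)
      \<and> f (clsH q (gen GC)) = clsW q
           (gen II * gen K1i - cst (q * (q - inverse q)^2) * gen E1 * gen F2 * gen K2i))"
  shows "(\<exists>f. P f)
       \<and> (\<forall>f g. P f \<longrightarrow> P g \<longrightarrow> (\<forall>x\<in>carrier (Hq q). f x = g x))
       \<and> (\<forall>f. P f \<longrightarrow>
            f (clsH q (alphaH q)) = clsW q (Lambda2 q + Lambda1 q * gen K1i * gen K2i)
          \<and> f (clsH q (betaH q)) = clsW q (gen II * gen K1i * gen K2i)
          \<and> f (clsH q (gammaH q)) = clsW q (Lambda1 q + Lambda2 q * gen K1i * gen K2i))"
proof -
  have g: "goodq q" using assms(1,2) by (simp add: goodq_def)
  have Pgen: "P f \<Longrightarrow> f (clsH q (gen Y)) = clsW q (imgs q Y)" for f Y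
    unfolding P_def by (cases Y) (simp_all add: imgs_def)
  have Pdet: "P f \<Longrightarrow> f (clsH q x) = clsW q (subst (imgs q) x)" for f x
  proof -
    assume Pf: "P f"
    then have "f \<in> ring_hom (Hq q) (Wq q)" "\<And>c. f (clsH q (cst c)) = clsW q (cst c)"
      unfolding P_def alg_hom_HW_def by auto
    then show ?thesis using hom_determined[OF g] Pgen[OF Pf] by blast
  qed
  have ex: "P (fW q)"
    unfolding P_def alg_hom_HW_def
    by (simp add: fW_hom[OF g] fW_cls[OF g] subst_cst subst_gen imgs_def)
  have uniq: "\<forall>f g. P f \<longrightarrow> P g \<longrightarrow> (\<forall>x\<in>carrier (Hq q). f x = g x)"
    by (auto simp: carrier_Hq Pdet)
  have mor: "\<forall>f. P f \<longrightarrow>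
            f (clsH q (alphaH q)) = clsW q (Lambda2 q + Lambda1 q * gen K1i * gen K2i)
          \<and> f (clsH q (betaH q)) = clsW q (gen II * gen K1i * gen K2i)
          \<and> f (clsH q (gammaH q)) = clsW q (Lambda1 q + Lambda2 q * gen K1i * gen K2i)"
    using cls_from_abs[OF Tal g] cls_from_abs[OF Tbe g] cls_from_abs[OF Tga g]
    by (simp add: Pdet)
  show ?thesis using ex uniq mor by blast
qed


end
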